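(* Fix $\rho>0$. There exists a constant $C=C(\rho)$ such that for all positive integers $K,L$, letting $\tilde I\subset\mathbb{Z}$ be an interval of $M=LK$ consecutive sites written as the union of $L$ disjoint intervals $I_1,\dots,I_L$ of $K$ consecutive sites each, with $\mathcal{M}_j=\sigma\big(\sum_{x\in I_j}\eta(x)\big)$ and $\tilde{\mathcal{M}}=\sigma\big(\sum_{x\in\tilde I}\eta(x)\big)$, the random variable $$V_2(\eta)=\sum_{j=1}^{L}E_{\nu_\rho}\Big(\sum_{x\in I_j}V_g(\eta(x))\,\Big|\,\mathcal{M}_j\Big)-E_{\nu_\rho}\Big(\sum_{x\in\tilde I}V_g(\eta(x))\,\Big|\,\tilde{\mathcal{M}}\Big)$$ satisfies $\mathrm{Var}(V_2,\nu_\rho)\le CL$.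
   Context: $g(k)=1_{\{k\ge1\}}$ for $k\in\mathbb{N}=\{0,1,2,\dots\}$. $\nu_\rho$ is the product measure on $\mathbb{N}^{\mathbb{Z}}$ with geometric marginals $\nu_\rho(\eta(x)=k)=\frac{1}{1+\rho}\big(\frac{\rho}{1+\rho}\big)^k$, $k\ge0$ (mean $\rho$). $\phi(\rho)=E_{\nu_\rho}[g(\eta(0))]=\frac{\rho}{1+\rho}$ and $V_g(\eta(x))=g(\eta(x))-\phi(\rho)-\phi'(\rho)[\eta(x)-\rho]$. *)

theory Defs
  imports "HOL-Probability.Probability"
begin

text \<open>The product measure nu_rho on configurations eta : Z -> N with geometric marginals
  P(eta(x) = k) = (1/(1+rho)) (rho/(1+rho))^k, i.e. geometric_pmf with success prob 1/(1+rho).\<close>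
definition nu :: "real \<Rightarrow> (int \<Rightarrow> nat) measure" where
  "nu \<rho> = (\<Pi>\<^sub>M x\<in>(UNIV::int set). measure_pmf (geometric_pmf (1 / (1 + \<rho>))))"

definition g :: "nat \<Rightarrow> real" where
  "g k = (if k \<ge> 1 then 1 else 0)"

definition phi :: "real \<Rightarrow> real" where
  "phi \<rho> = \<rho> / (1 + \<rho>)"

definition Vg :: "real \<Rightarrow> nat \<Rightarrow> real" where
  "Vg \<rho> k = g k - phi \<rho> - deriv phi \<rho> * (real k - \<rho>)"

definition sum_sigma :: "real \<Rightarrow> int set \<Rightarrow> (int \<Rightarrow> nat) measure" where
  "sum_sigma \<rho> I = vimage_algebra (space (nu \<rho>)) (\<lambda>\<eta>. \<Sum>x\<in>I. \<eta> x) (count_space UNIV)"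

definition cond_block :: "real \<Rightarrow> int set \<Rightarrow> (int \<Rightarrow> nat) \<Rightarrow> real" where
  "cond_block \<rho> I = real_cond_exp (nu \<rho>) (sum_sigma \<rho> I) (\<lambda>\<eta>. \<Sum>x\<in>I. Vg \<rho> (\<eta> x))"

definition V2 :: "real \<Rightarrow> nat \<Rightarrow> nat \<Rightarrow> int \<Rightarrow> (int \<Rightarrow> nat) \<Rightarrow> real" where
  "V2 \<rho> K L a \<eta> =
     (\<Sum>j\<in>{1..L}. cond_block \<rho> {a + int ((j - 1) * K) ..< a + int (j * K)} \<eta>)
     - cond_block \<rho> {a ..< a + int (L * K)} \<eta>"

definition variance_of :: "'a measure \<Rightarrow> ('a \<Rightarrow> real) \<Rightarrow> real" where
  "variance_of M X = (\<integral>\<omega>. (X \<omega> - (\<integral>\<omega>'. X \<omega>' \<partial>M))\<^sup>2 \<partial>M)"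

end

theory Submission
  imports Defs
begin

locale geo =
  fixes \<rho> :: real
  assumes rho_pos: "\<rho> > 0"
begin

definition p :: real where "p = 1 / (1 + \<rho>)"

lemma p_pos: "0 < p" and p_lt1: "p < 1" and p_in: "p \<in> {0<..1}"
  using rho_pos by (auto simp: p_def field_simps)

abbreviation G where "G \<equiv> measure_pmf (geometric_pmf p)"

lemma nu_eq: "nu \<rho> = PiM UNIV (\<lambda>_. G)"
  unfolding nu_def p_def ..

lemma prod_G: "product_prob_space (\<lambda>_. G)"
  by unfold_locales

lemma prob_nu: "prob_space (nu \<rho>)"
  unfolding nu_eq by (rule prob_space_PiM) (rule measure_pmf.prob_space_axioms)

lemma space_nu[simp]: "space (nu \<rho>) = UNIV"
  by (simp add: nu_eq space_PiM)

lemma sets_G[simp]: "sets G = UNIV" by simp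

lemma coord_meas[measurable]: "(\<lambda>\<eta>. \<eta> x) \<in> measurable (nu \<rho>) (count_space UNIV)"
  unfolding nu_eq by measurable

lemma coord_meas_G: "(\<lambda>\<eta>. \<eta> x) \<in> measurable (nu \<rho>) G"
  using coord_meas by (simp add: measurable_cong_sets)

lemma distr_coord: "distr (nu \<rho>) G (\<lambda>\<eta>. \<eta> x) = G"
  unfolding nu_eq using product_prob_space.PiM_component[OF prod_G, of x] by simp

end

sublocale geo \<subseteq> N: prob_space "nu \<rho>"
  by (rule prob_nu)

context geo begin

lemma indep_coords: "N.indep_vars (\<lambda>_. G) (\<lambda>x \<eta>. \<eta> x) UNIV"
proof -
  have "distr (nu \<rho>) (\<Pi>\<^sub>M i\<in>UNIV. G) (\<lambda>x. \<lambda>i\<in>UNIV. x i) = (\<Pi>\<^sub>M i\<in>UNIV. distr (nu \<rho>) G (\<lambda>\<eta>. \<eta> i))"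
    by (simp add: distr_coord nu_eq[symmetric] restrict_UNIV)
  then show ?thesis
    by (subst N.indep_vars_iff_distr_eq_PiM) (auto simp: coord_meas_G)
qed

lemma prob_UNIV[simp]: "N.prob UNIV = 1"
  using N.prob_space by simp

lemma prob_coord: "N.prob {\<eta>. \<eta> x = k} = (1 - p)^k * p"
proof -
  have "N.prob {\<eta>. \<eta> x = k} = measure (distr (nu \<rho>) G (\<lambda>\<eta>. \<eta> x)) {k}"
    by (subst measure_distr) (auto simp: coord_meas_G vimage_def)
  also have "\<dots> = (1 - p)^k * p" using p_pos p_lt1 by (simp add: distr_coord measure_pmf_single)
  finally show ?thesis .
qed


definition Sb :: "int set \<Rightarrow> (int \<Rightarrow> nat) \<Rightarrow> nat" where
  "Sb A \<eta> = (\<Sum>x\<in>A. \<eta> x)"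

lemma Sb_meas[measurable]: "Sb A \<in> measurable (nu \<rho>) (count_space UNIV)"
  unfolding Sb_def by (rule measurable_sum_nat) (rule coord_meas)

lemma indep_Sb:
  assumes "A \<inter> B = {}"
  shows "N.indep_var (count_space UNIV) (Sb A) (count_space UNIV) (Sb B)"
proof -
  have i: "N.indep_var (PiM A (\<lambda>_. G)) (\<lambda>\<eta>. restrict (\<lambda>i. \<eta> i) A) (PiM B (\<lambda>_. G)) (\<lambda>\<eta>. restrict (\<lambda>i. \<eta> i) B)"
    by (rule N.indep_var_restrict[OF indep_coords]) (use assms in auto)
  have m: "(\<lambda>f. \<Sum>x\<in>C. f x) \<in> measurable (PiM C (\<lambda>_. G)) (count_space UNIV)" for C :: "int set"
  proof -
    have "(\<lambda>f::int\<Rightarrow>nat. \<Sum>x\<in>C. f x) \<in> measurable (PiM C (\<lambda>_. count_space UNIV)) (count_space UNIV)"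
    proof -
      have "\<And>i. i\<in>C \<Longrightarrow> (\<lambda>f. f i) \<in> measurable (PiM C (\<lambda>_. count_space UNIV)) (count_space (UNIV::nat set))"
        by (rule measurable_component_singleton)
      then show ?thesis by (rule measurable_sum_nat)
    qed
    note m1 = this
    have s1: "sets (PiM C (\<lambda>_. G)) = sets (PiM C (\<lambda>_. count_space UNIV))"
      by (rule sets_PiM_cong) auto
    show ?thesis by (simp only: measurable_cong_sets[OF s1 refl] m1)
  qed
  have "N.indep_var (count_space UNIV) ((\<lambda>f. \<Sum>x\<in>A. f x) \<circ> (\<lambda>\<eta>. restrict (\<lambda>i. \<eta> i) A))
          (count_space UNIV) ((\<lambda>f. \<Sum>x\<in>B. f x) \<circ> (\<lambda>\<eta>. restrict (\<lambda>i. \<eta> i) B))"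
    by (rule N.indep_var_compose[OF i m m])
  also have "((\<lambda>f. \<Sum>x\<in>A. f x) \<circ> (\<lambda>\<eta>. restrict (\<lambda>i. \<eta> i) A)) = Sb A"
    by (auto simp: Sb_def fun_eq_iff)
  also have "((\<lambda>f. \<Sum>x\<in>B. f x) \<circ> (\<lambda>\<eta>. restrict (\<lambda>i. \<eta> i) B)) = Sb B"
    by (auto simp: Sb_def fun_eq_iff)
  finally show ?thesis .
qed

lemma indep_Sb_fun:
  assumes "A \<inter> B = {}"
  shows "N.indep_var borel (\<lambda>\<eta>. f (Sb A \<eta>) :: real) borel (\<lambda>\<eta>. h (Sb B \<eta>) :: real)"
proof -
  have "N.indep_var borel (f \<circ> Sb A) borel (h \<circ> Sb B)"
    by (rule N.indep_var_compose[OF indep_Sb[OF assms]]) auto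
  then show ?thesis by (simp add: comp_def)
qed

lemma Sb_single[simp]: "Sb {x} \<eta> = \<eta> x" by (simp add: Sb_def)


lemma Sb_ev[measurable]: "{\<eta>. Sb A \<eta> = k} \<in> sets (nu \<rho>)"
  using measurable_sets[OF Sb_meas, of "{k}" A] by (simp add: vimage_def)

lemma Sb_ev2: "{\<eta>. Sb A \<eta> = i \<and> Sb B \<eta> = j} \<in> sets (nu \<rho>)"
proof -
  have "{\<eta>. Sb A \<eta> = i \<and> Sb B \<eta> = j} = {\<eta>. Sb A \<eta> = i} \<inter> {\<eta>. Sb B \<eta> = j}" by auto
  then show ?thesis using Sb_ev by auto
qed

lemma Sb_ev2': "{\<eta>. Sb A \<eta> = i \<and> \<eta> y = j} \<in> sets (nu \<rho>)"
  using Sb_ev2[of A i "{y}" j] by simp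

lemma indep_prob:
  assumes "A \<inter> B = {}"
  shows "N.prob {\<eta>. Sb A \<eta> = i \<and> Sb B \<eta> = j} = N.prob {\<eta>. Sb A \<eta> = i} * N.prob {\<eta>. Sb B \<eta> = j}"
  using N.prob_indep_random_variable[OF indep_Sb[OF assms], of "{i}" "{j}"] by simp

definition nb :: "nat \<Rightarrow> nat \<Rightarrow> real" where
  "nb K n = real ((n + K - 1) choose n) * p ^ K * (1 - p) ^ n"

lemma nb_step: "(\<Sum>k\<le>n. nb K k * ((1 - p) ^ (n - k) * p)) = nb (Suc K) n"
proof -
  have "(\<Sum>k\<le>n. nb K k * ((1 - p) ^ (n - k) * p)) = (\<Sum>k\<le>n. real ((k + K - 1) choose k)) * p ^ Suc K * (1 - p) ^ n"
    unfolding sum_distrib_right nb_def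
  proof (rule sum.cong[OF refl])
    fix k assume "k \<in> {..n}"
    then have "(1 - p) ^ k * (1 - p) ^ (n - k) = (1 - p) ^ n" by (simp add: power_add[symmetric])
    then show "real ((k + K - 1) choose k) * p ^ K * (1 - p) ^ k * ((1 - p) ^ (n - k) * p) =
         real ((k + K - 1) choose k) * p ^ Suc K * (1 - p) ^ n"
      by (simp add: algebra_simps)
  qed
  also have "(\<Sum>k\<le>n. real ((k + K - 1) choose k)) = real ((n + K) choose n)"
  proof (cases K)
    case 0
    have "(\<Sum>k\<le>n. real ((k + K - 1) choose k)) = (\<Sum>k\<in>{0}. real ((k + K - 1) choose k))"
      by (rule sum.mono_neutral_right) (auto simp: 0)
    then show ?thesis by (simp add: 0)
  next
    case (Suc r)
    have "(\<Sum>k\<le>n. (r + k) choose k) = Suc (r + n) choose n" by (rule sum_choose_lower)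
    then have "real (\<Sum>k\<le>n. (r + k) choose k) = real (Suc (r + n) choose n)" by simp
    then show ?thesis by (simp add: Suc add.commute)
  qed
  finally show ?thesis by (simp add: nb_def)
qed

lemma prob_Sb: "finite A \<Longrightarrow> N.prob {\<eta>. Sb A \<eta> = n} = nb (card A) n"
proof (induction A arbitrary: n rule: finite_induct)
  case empty
  show ?case
  proof (cases n)
    case 0 then show ?thesis using N.prob_space by (simp add: Sb_def nb_def)
  next
    case (Suc m) then show ?thesis by (simp add: Sb_def nb_def)
  qed
next
  case (insert y A)
  have dis: "A \<inter> {y} = {}" using insert by auto
  have eq: "{\<eta>. Sb (insert y A) \<eta> = n} = (\<Union>k\<in>{..n}. {\<eta>. Sb A \<eta> = k \<and> Sb {y} \<eta> = n - k})"
    using insert by (auto simp: Sb_def)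
  have "N.prob {\<eta>. Sb (insert y A) \<eta> = n} = (\<Sum>k\<le>n. N.prob {\<eta>. Sb A \<eta> = k \<and> Sb {y} \<eta> = n - k})"
    unfolding eq
    by (rule N.finite_measure_finite_Union) (auto simp: disjoint_family_on_def Sb_ev2')
  also have "\<dots> = (\<Sum>k\<le>n. nb (card A) k * ((1 - p) ^ (n - k) * p))"
  proof (rule sum.cong[OF refl])
    fix k
    have ip: "N.prob {\<eta>. Sb A \<eta> = k \<and> \<eta> y = n - k} = N.prob {\<eta>. Sb A \<eta> = k} * N.prob {\<eta>. \<eta> y = n - k}"
      using indep_prob[OF dis, of k "n - k"] by simp
    show "N.prob {\<eta>. Sb A \<eta> = k \<and> Sb {y} \<eta> = n - k} = nb (card A) k * ((1 - p) ^ (n - k) * p)"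
      by (simp add: ip insert.IH prob_coord)
  qed
  also have "\<dots> = nb (card (insert y A)) n"
    using insert by (simp add: nb_step)
  finally show ?case .
qed


lemma nb_diff: "nb (Suc r) n - nb r n * p = nb (Suc r) n * (real n / (real n + real (Suc r) - 1))"
proof (cases n)
  case 0 then show ?thesis by (simp add: nb_def)
next
  case (Suc m)
  have pas: "Suc (m + r) choose Suc m = (m + r choose m) + (m + r choose Suc m)"
    by simp
  have st: "Suc (m + r) * (m + r choose m) = (Suc (m + r) choose Suc m) * Suc m"
    by (rule Suc_times_binomial_eq)
  have st': "real (m + r choose m) = real (Suc (m + r) choose Suc m) * (real (Suc m) / real (Suc (m + r)))"
  proof -
    have "real (Suc (m + r)) * real (m + r choose m) = real (Suc (m + r) choose Suc m) * real (Suc m)"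
      using st by (metis of_nat_mult)
    then show ?thesis by (simp add: field_simps)
  qed
  have "nb (Suc r) n - nb r n * p = real (m + r choose m) * p ^ Suc r * (1 - p) ^ n"
    unfolding nb_def Suc using pas by (simp add: algebra_simps)
  also have "\<dots> = nb (Suc r) n * (real n / (real n + real (Suc r) - 1))"
    unfolding nb_def Suc st' by (simp add: field_simps del: binomial_Suc_Suc)
  finally show ?thesis .
qed

lemma prob_Sb_pos:
  assumes A: "finite A" "x \<in> A"
  shows "N.prob {\<eta>. Sb A \<eta> = n \<and> \<eta> x \<ge> 1} = nb (card A) n * (real n / (real n + real (card A) - 1))"
proof -
  obtain r where r: "card A = Suc r" using A by (cases "card A") auto
  have cA: "card (A - {x}) = r" using A r by simp
  have dis: "(A - {x}) \<inter> {x} = {}" by auto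
  have e1: "{\<eta>. Sb A \<eta> = n \<and> \<eta> x \<ge> 1} = {\<eta>. Sb A \<eta> = n} - {\<eta>. Sb (A - {x}) \<eta> = n \<and> \<eta> x = 0}"
  proof -
    have "Sb A \<eta> = \<eta> x + Sb (A - {x}) \<eta>" for \<eta>
      unfolding Sb_def using A by (simp add: sum.remove)
    then show ?thesis by auto
  qed
  have sub: "{\<eta>. Sb (A - {x}) \<eta> = n \<and> \<eta> x = 0} \<subseteq> {\<eta>. Sb A \<eta> = n}"
  proof
    fix \<eta> assume "\<eta> \<in> {\<eta>. Sb (A - {x}) \<eta> = n \<and> \<eta> x = 0}"
    moreover have "Sb A \<eta> = \<eta> x + Sb (A - {x}) \<eta>"
      unfolding Sb_def using A by (simp add: sum.remove)
    ultimately show "\<eta> \<in> {\<eta>. Sb A \<eta> = n}" by simp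
  qed
  have ip: "N.prob {\<eta>. Sb (A - {x}) \<eta> = n \<and> \<eta> x = 0} = nb r n * p"
    using indep_prob[OF dis, of n 0] prob_Sb[of "A - {x}" n] A cA prob_coord[of x 0] by simp
  have "N.prob {\<eta>. Sb A \<eta> = n \<and> \<eta> x \<ge> 1} = N.prob {\<eta>. Sb A \<eta> = n} - N.prob {\<eta>. Sb (A - {x}) \<eta> = n \<and> \<eta> x = 0}"
    unfolding e1 by (rule N.finite_measure_Diff) (auto simp: Sb_ev2' sub)
  also have "\<dots> = nb (Suc r) n - nb r n * p" using ip prob_Sb[OF A(1)] r by simp
  also have "\<dots> = nb (card A) n * (real n / (real n + real (card A) - 1))" using nb_diff r by simp
  finally show ?thesis .
qed


definition Gs :: "int set \<Rightarrow> (int \<Rightarrow> nat) \<Rightarrow> real" where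
  "Gs A \<eta> = (\<Sum>x\<in>A. g (\<eta> x))"

definition Psi :: "nat \<Rightarrow> nat \<Rightarrow> real" where
  "Psi K n = real K * real n / (real n + real K - 1)"

lemma ev_pos[measurable]: "{\<eta>. Sb A \<eta> = n \<and> \<eta> x \<ge> 1} \<in> sets (nu \<rho>)"
proof -
  have "{\<eta>. Sb A \<eta> = n \<and> \<eta> x \<ge> 1} = {\<eta>. Sb A \<eta> = n} \<inter> (\<lambda>\<eta>. \<eta> x) -` {1..}"
    by auto
  also have "\<dots> \<in> sets (nu \<rho>)"
    using measurable_sets[OF coord_meas, of "{1..}" x] Sb_ev by auto
  finally show ?thesis .
qed

lemma Gs_n:
  assumes A: "finite A" "A \<noteq> {}"
  shows "(\<integral>\<^sup>+ \<eta>. ennreal (Gs A \<eta>) * indicator {\<eta>. Sb A \<eta> = n} \<eta> \<partial>nu \<rho>)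
     = ennreal (Psi (card A) n * nb (card A) n)"
proof -
  have "(\<integral>\<^sup>+ \<eta>. ennreal (Gs A \<eta>) * indicator {\<eta>. Sb A \<eta> = n} \<eta> \<partial>nu \<rho>)
      = (\<integral>\<^sup>+ \<eta>. (\<Sum>x\<in>A. indicator {\<eta>. Sb A \<eta> = n \<and> \<eta> x \<ge> 1} \<eta>) \<partial>nu \<rho>)"
  proof (rule nn_integral_cong)
    fix \<eta>
    have e: "ennreal (Gs A \<eta>) = (\<Sum>x\<in>A. ennreal (g (\<eta> x)))"
      unfolding Gs_def by (subst sum_ennreal) (auto simp: g_def)
    show "ennreal (Gs A \<eta>) * indicator {\<eta>. Sb A \<eta> = n} \<eta> =
      (\<Sum>x\<in>A. indicator {\<eta>. Sb A \<eta> = n \<and> \<eta> x \<ge> 1} \<eta>)"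
      unfolding e sum_distrib_right by (intro sum.cong) (auto simp: g_def indicator_def)
  qed
  also have "\<dots> = (\<Sum>x\<in>A. \<integral>\<^sup>+ \<eta>. indicator {\<eta>. Sb A \<eta> = n \<and> \<eta> x \<ge> 1} \<eta> \<partial>nu \<rho>)"
    by (rule nn_integral_sum) auto
  also have "\<dots> = (\<Sum>x\<in>A. ennreal (nb (card A) n * (real n / (real n + real (card A) - 1))))"
  proof (rule sum.cong[OF refl])
    fix x assume x: "x \<in> A"
    have "(\<integral>\<^sup>+ \<eta>. indicator {\<eta>. Sb A \<eta> = n \<and> \<eta> x \<ge> 1} \<eta> \<partial>nu \<rho>) = emeasure (nu \<rho>) {\<eta>. Sb A \<eta> = n \<and> \<eta> x \<ge> 1}"
      by (rule nn_integral_indicator[OF ev_pos])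
    also have "\<dots> = ennreal (nb (card A) n * (real n / (real n + real (card A) - 1)))"
      by (simp only: N.emeasure_eq_measure prob_Sb_pos[OF A(1) x])
    finally show "(\<integral>\<^sup>+ \<eta>. indicator {\<eta>. Sb A \<eta> = n \<and> \<eta> x \<ge> 1} \<eta> \<partial>nu \<rho>) = ennreal (nb (card A) n * (real n / (real n + real (card A) - 1)))" .
  qed
  also have "\<dots> = ennreal (Psi (card A) n * nb (card A) n)"
  proof -
    have c1: "card A \<ge> 1" using A by (simp add: Suc_le_eq card_gt_0_iff)
    have nn: "0 \<le> nb (card A) n * (real n / (real n + real (card A) - 1))"
    proof -
      have d: "real n + real (card A) - 1 \<ge> 0" using c1 by simp
      have "nb (card A) n \<ge> 0" using p_pos p_lt1 by (simp add: nb_def)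
      then show ?thesis using d by simp
    qed
    show ?thesis
      using nn by (subst sum_ennreal) (auto simp: Psi_def mult_ac)
  qed
  finally show ?thesis .
qed


lemma Gs_meas[measurable]: "Gs A \<in> borel_measurable (nu \<rho>)"
  unfolding Gs_def by measurable

lemma Psi_nonneg: "K \<ge> 1 \<Longrightarrow> Psi K n \<ge> 0"
  unfolding Psi_def by (auto intro!: divide_nonneg_nonneg)

lemma nb_nonneg: "nb K n \<ge> 0"
  using p_pos p_lt1 by (simp add: nb_def)

lemma Gs_Psi_nn:
  assumes A: "finite A" "A \<noteq> {}"
  shows "(\<integral>\<^sup>+ \<eta>. ennreal (Gs A \<eta>) * indicator (Sb A -` B) \<eta> \<partial>nu \<rho>)
       = (\<integral>\<^sup>+ \<eta>. ennreal (Psi (card A) (Sb A \<eta>)) * indicator (Sb A -` B) \<eta> \<partial>nu \<rho>)"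
proof -
  define Bn where "Bn n = {\<eta>. Sb A \<eta> = n}" for n
  have c1: "card A \<ge> 1" using A by (simp add: Suc_le_eq card_gt_0_iff)
  have Bn_sets: "Bn n \<in> sets (nu \<rho>)" for n unfolding Bn_def by (rule Sb_ev)
  have dis: "disjoint_family Bn" by (auto simp: disjoint_family_on_def Bn_def)
  have U: "(\<Union>n. Bn n) = UNIV" by (auto simp: Bn_def)
  have SbB: "Sb A -` B \<in> sets (nu \<rho>)"
    using measurable_sets[OF Sb_meas, of B A] by simp
  have decomp: "(\<integral>\<^sup>+ \<eta>. f \<eta> \<partial>nu \<rho>) = (\<Sum>n. \<integral>\<^sup>+ \<eta>. f \<eta> * indicator (Bn n) \<eta> \<partial>nu \<rho>)"
    if f[measurable]: "f \<in> borel_measurable (nu \<rho>)" for f :: "(int \<Rightarrow> nat) \<Rightarrow> ennreal"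
  proof -
    have "(\<integral>\<^sup>+ \<eta>. f \<eta> \<partial>nu \<rho>) = (\<integral>\<^sup>+ \<eta> \<in> (\<Union>n. Bn n). f \<eta> \<partial>nu \<rho>)"
      unfolding U by simp
    also have "\<dots> = (\<Sum>n. \<integral>\<^sup>+ \<eta> \<in> Bn n. f \<eta> \<partial>nu \<rho>)"
      by (rule nn_integral_disjoint_family[OF f Bn_sets dis])
    finally show ?thesis .
  qed
  have trm: "(\<integral>\<^sup>+ \<eta>. ennreal (Gs A \<eta>) * indicator (Sb A -` B) \<eta> * indicator (Bn n) \<eta> \<partial>nu \<rho>)
    = (\<integral>\<^sup>+ \<eta>. ennreal (Psi (card A) (Sb A \<eta>)) * indicator (Sb A -` B) \<eta> * indicator (Bn n) \<eta> \<partial>nu \<rho>)" for n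
  proof -
    have "(\<integral>\<^sup>+ \<eta>. ennreal (Gs A \<eta>) * indicator (Sb A -` B) \<eta> * indicator (Bn n) \<eta> \<partial>nu \<rho>)
        = (\<integral>\<^sup>+ \<eta>. indicator B n * (ennreal (Gs A \<eta>) * indicator {\<eta>. Sb A \<eta> = n} \<eta>) \<partial>nu \<rho>)"
      by (rule nn_integral_cong) (auto simp: Bn_def indicator_def)
    also have "\<dots> = indicator B n * (\<integral>\<^sup>+ \<eta>. ennreal (Gs A \<eta>) * indicator {\<eta>. Sb A \<eta> = n} \<eta> \<partial>nu \<rho>)"
      by (rule nn_integral_cmult) (use Sb_ev in measurable)
    also have "\<dots> = indicator B n * ennreal (Psi (card A) n * nb (card A) n)"
      by (simp only: Gs_n[OF A])
    also have "\<dots> = (indicator B n * ennreal (Psi (card A) n)) * emeasure (nu \<rho>) (Bn n)"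
      using Psi_nonneg[OF c1, of n] nb_nonneg[of "card A" n]
      by (simp add: Bn_def N.emeasure_eq_measure prob_Sb A ennreal_mult mult.assoc)
    also have "\<dots> = (\<integral>\<^sup>+ \<eta>. (indicator B n * ennreal (Psi (card A) n)) * indicator (Bn n) \<eta> \<partial>nu \<rho>)"
      by (rule nn_integral_cmult_indicator[OF Bn_sets, symmetric])
    also have "\<dots> = (\<integral>\<^sup>+ \<eta>. ennreal (Psi (card A) (Sb A \<eta>)) * indicator (Sb A -` B) \<eta> * indicator (Bn n) \<eta> \<partial>nu \<rho>)"
      by (rule nn_integral_cong) (auto simp: Bn_def indicator_def)
    finally show ?thesis .
  qed
  have m1: "(\<lambda>\<eta>. ennreal (Gs A \<eta>) * indicator (Sb A -` B) \<eta>) \<in> borel_measurable (nu \<rho>)"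
    using SbB by measurable
  have m2: "(\<lambda>\<eta>. ennreal (Psi (card A) (Sb A \<eta>)) * indicator (Sb A -` B) \<eta>) \<in> borel_measurable (nu \<rho>)"
    using SbB by measurable
  show ?thesis
    unfolding decomp[OF m1] decomp[OF m2] using trm by simp
qed


lemma int_coord:
  fixes h :: "nat \<Rightarrow> real"
  assumes "integrable G h"
  shows "integrable (nu \<rho>) (\<lambda>\<eta>. h (\<eta> x))" and "(\<integral>\<eta>. h (\<eta> x) \<partial>nu \<rho>) = (\<integral>k. h k \<partial>G)"
proof -
  have hm: "h \<in> borel_measurable G" by simp
  show "integrable (nu \<rho>) (\<lambda>\<eta>. h (\<eta> x))"
    using integrable_distr_eq[OF coord_meas_G hm, of x] assms by (simp add: distr_coord)
  show "(\<integral>\<eta>. h (\<eta> x) \<partial>nu \<rho>) = (\<integral>k. h k \<partial>G)"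
    using integral_distr[OF coord_meas_G hm, of x] by (simp add: distr_coord)
qed

lemma int_G_real: "integrable G real"
  using integrable_real_geometric_pmf[OF p_in] .

lemma int_G_bounded: "(\<And>k. \<bar>h k\<bar> \<le> B) \<Longrightarrow> integrable G (h :: nat \<Rightarrow> real)"
  by (rule measure_pmf.integrable_const_bound[where B=B]) auto

lemma int_Vg: "integrable (nu \<rho>) (\<lambda>\<eta>. Vg \<rho> (\<eta> x))"
proof -
  have ig: "integrable G g" by (rule int_G_bounded[of g 1]) (simp add: g_def)
  have "integrable G (\<lambda>k. g k - phi \<rho> - deriv phi \<rho> * (real k - \<rho>))"
    using int_G_real ig by auto
  then show ?thesis using int_coord(1) unfolding Vg_def by blast
qed

lemma int_real_coord: "integrable (nu \<rho>) (\<lambda>\<eta>. real (\<eta> x))"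
  using int_coord(1)[OF int_G_real] .

lemma int_real_Sb: "integrable (nu \<rho>) (\<lambda>\<eta>. real (Sb A \<eta>))"
  unfolding Sb_def of_nat_sum using int_real_coord by auto

lemma Psi_le: "K \<ge> 1 \<Longrightarrow> Psi K n \<le> real K"
proof -
  assume K: "K \<ge> 1"
  show ?thesis
  proof (cases n)
    case 0 then show ?thesis by (simp add: Psi_def)
  next
    case (Suc m)
    have "real n \<le> real n + real K - 1" using K by simp
    moreover have "real n + real K - 1 > 0" using Suc K by simp
    ultimately have "real n / (real n + real K - 1) \<le> 1" by simp
    then have "real K * (real n / (real n + real K - 1)) \<le> real K * 1"
      by (intro mult_left_mono) auto
    then show ?thesis by (simp add: Psi_def)
  qed
qed

definition Fb :: "nat \<Rightarrow> nat \<Rightarrow> real" where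
  "Fb K n = Psi K n - real K * phi \<rho> - deriv phi \<rho> * (real n - real K * \<rho>)"

lemma int_Psi_Sb: "K \<ge> 1 \<Longrightarrow> integrable (nu \<rho>) (\<lambda>\<eta>. Psi K (Sb A \<eta>))"
  by (rule N.integrable_const_bound[where B="real K"]) (auto simp: Psi_nonneg Psi_le)

lemma int_Fb_Sb: "K \<ge> 1 \<Longrightarrow> integrable (nu \<rho>) (\<lambda>\<eta>. Fb K (Sb A \<eta>))"
  unfolding Fb_def using int_Psi_Sb int_real_Sb by auto

lemma int_Gs: "integrable (nu \<rho>) (Gs A)"
  unfolding Gs_def using int_coord(1)[OF int_G_bounded[of g 1]] by (auto simp: g_def)

lemma Zs_eq: "finite A \<Longrightarrow> (\<Sum>x\<in>A. Vg \<rho> (\<eta> x)) = Gs A \<eta> - real (card A) * phi \<rho> - deriv phi \<rho> * (real (Sb A \<eta>) - real (card A) * \<rho>)"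
  unfolding Vg_def Gs_def Sb_def of_nat_sum
  by (simp add: sum_subtractf sum_distrib_left[symmetric] right_diff_distrib[symmetric])

lemma Sb_eta: "(\<lambda>\<eta>. \<Sum>x\<in>A. \<eta> x) = Sb A"
  by (rule ext) (simp add: Sb_def)

lemma sigma_sub: "finite_measure_subalgebra (nu \<rho>) (sum_sigma \<rho> A)"
proof -
  have sets: "sets (sum_sigma \<rho> A) = {Sb A -` B | B. B \<in> sets (count_space (UNIV :: nat set))}"
    unfolding sum_sigma_def Sb_eta by (subst sets_vimage_algebra2) auto
  show ?thesis
  proof (unfold_locales)
    show "subalgebra (nu \<rho>) (sum_sigma \<rho> A)"
      unfolding subalgebra_def
    proof
      show "sets (sum_sigma \<rho> A) \<subseteq> sets (nu \<rho>)"
        unfolding sets using measurable_sets[OF Sb_meas] by auto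
      show "space (sum_sigma \<rho> A) = space (nu \<rho>)"
        by (simp add: sum_sigma_def)
    qed
  qed
qed

lemma ind_mult_int: "E \<in> sets M \<Longrightarrow> integrable M (f :: _ \<Rightarrow> real) \<Longrightarrow> integrable M (\<lambda>x. indicator E x * f x)"
  using integrable_mult_indicator[of E M f] by simp

lemma cond_block_AE:
  assumes A: "finite A" "A \<noteq> {}"
  shows "AE \<eta> in nu \<rho>. cond_block \<rho> A \<eta> = Fb (card A) (Sb A \<eta>)"
proof -
  interpret S: finite_measure_subalgebra "nu \<rho>" "sum_sigma \<rho> A" by (rule sigma_sub)
  have c1: "card A \<ge> 1" using A by (simp add: Suc_le_eq card_gt_0_iff)
  have sets: "sets (sum_sigma \<rho> A) = {Sb A -` B | B. B \<in> sets (count_space (UNIV :: nat set))}"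
    unfolding sum_sigma_def Sb_eta by (subst sets_vimage_algebra2) auto
  have intZ: "integrable (nu \<rho>) (\<lambda>\<eta>. \<Sum>x\<in>A. Vg \<rho> (\<eta> x))"
    using int_Vg by auto
  have mF: "(\<lambda>\<eta>. Fb (card A) (Sb A \<eta>)) \<in> borel_measurable (sum_sigma \<rho> A)"
  proof -
    have "Sb A \<in> measurable (sum_sigma \<rho> A) (count_space UNIV)"
      unfolding sum_sigma_def Sb_eta by (rule measurable_vimage_algebra1) auto
    then show ?thesis by measurable
  qed
  have "AE \<eta> in nu \<rho>. real_cond_exp (nu \<rho>) (sum_sigma \<rho> A) (\<lambda>\<eta>. \<Sum>x\<in>A. Vg \<rho> (\<eta> x)) \<eta> = Fb (card A) (Sb A \<eta>)"
  proof (rule S.real_cond_exp_charact)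
    fix E assume "E \<in> sets (sum_sigma \<rho> A)"
    then obtain B where E: "E = Sb A -` B" using sets by auto
    have SbB: "Sb A -` B \<in> sets (nu \<rho>)"
      using measurable_sets[OF Sb_meas, of B A] by simp
    have i1: "integrable (nu \<rho>) (\<lambda>\<eta>. indicator E \<eta> * Gs A \<eta>)"
      unfolding E by (rule ind_mult_int[OF SbB int_Gs])
    have i2: "integrable (nu \<rho>) (\<lambda>\<eta>. indicator E \<eta> * Psi (card A) (Sb A \<eta>))"
      unfolding E by (rule ind_mult_int[OF SbB int_Psi_Sb[OF c1]])
    have nnG: "Gs A \<eta> \<ge> 0" for \<eta> unfolding Gs_def by (auto intro!: sum_nonneg simp: g_def)
    have eqGP: "(\<integral>\<eta>. indicator E \<eta> * Gs A \<eta> \<partial>nu \<rho>) = (\<integral>\<eta>. indicator E \<eta> * Psi (card A) (Sb A \<eta>) \<partial>nu \<rho>)"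
    proof -
      have "(\<integral>\<eta>. indicator E \<eta> * Gs A \<eta> \<partial>nu \<rho>) = enn2real (\<integral>\<^sup>+ \<eta>. ennreal (indicator E \<eta> * Gs A \<eta>) \<partial>nu \<rho>)"
        by (rule integral_eq_nn_integral) (use SbB E nnG in auto)
      also have "(\<integral>\<^sup>+ \<eta>. ennreal (indicator E \<eta> * Gs A \<eta>) \<partial>nu \<rho>) = (\<integral>\<^sup>+ \<eta>. ennreal (Gs A \<eta>) * indicator (Sb A -` B) \<eta> \<partial>nu \<rho>)"
        by (rule nn_integral_cong) (auto simp: E indicator_def)
      also have "\<dots> = (\<integral>\<^sup>+ \<eta>. ennreal (Psi (card A) (Sb A \<eta>)) * indicator (Sb A -` B) \<eta> \<partial>nu \<rho>)"
        by (rule Gs_Psi_nn[OF A])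
      also have "\<dots> = (\<integral>\<^sup>+ \<eta>. ennreal (indicator E \<eta> * Psi (card A) (Sb A \<eta>)) \<partial>nu \<rho>)"
        by (rule nn_integral_cong) (auto simp: E indicator_def)
      also have "enn2real \<dots> = (\<integral>\<eta>. indicator E \<eta> * Psi (card A) (Sb A \<eta>) \<partial>nu \<rho>)"
        by (rule integral_eq_nn_integral[symmetric]) (use SbB E Psi_nonneg[OF c1] in auto)
      finally show ?thesis .
    qed
    have iZ: "integrable (nu \<rho>) (\<lambda>\<eta>. indicator E \<eta> * (\<Sum>x\<in>A. Vg \<rho> (\<eta> x)))"
      unfolding E by (rule ind_mult_int[OF SbB intZ])
    have iF: "integrable (nu \<rho>) (\<lambda>\<eta>. indicator E \<eta> * Fb (card A) (Sb A \<eta>))"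
      unfolding E by (rule ind_mult_int[OF SbB int_Fb_Sb[OF c1]])
    have pw: "indicator E \<eta> * (\<Sum>x\<in>A. Vg \<rho> (\<eta> x)) = indicator E \<eta> * Fb (card A) (Sb A \<eta>) + (indicator E \<eta> * Gs A \<eta> - indicator E \<eta> * Psi (card A) (Sb A \<eta>))" for \<eta>
      unfolding Zs_eq[OF A(1)] Fb_def by (simp add: algebra_simps)
    have "(\<integral>\<eta>. indicator E \<eta> * (\<Sum>x\<in>A. Vg \<rho> (\<eta> x)) \<partial>nu \<rho>) =
      (\<integral>\<eta>. indicator E \<eta> * Fb (card A) (Sb A \<eta>) + (indicator E \<eta> * Gs A \<eta> - indicator E \<eta> * Psi (card A) (Sb A \<eta>)) \<partial>nu \<rho>)"
      unfolding pw ..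
    also have "\<dots> = (\<integral>\<eta>. indicator E \<eta> * Fb (card A) (Sb A \<eta>) \<partial>nu \<rho>)"
      using iF i1 i2 eqGP by simp
    finally show "(\<integral>\<eta>\<in>E. (\<Sum>x\<in>A. Vg \<rho> (\<eta> x)) \<partial>nu \<rho>) = (\<integral>\<eta>\<in>E. Fb (card A) (Sb A \<eta>) \<partial>nu \<rho>)"
      by (simp add: set_lebesgue_integral_def)
  next
    show "integrable (nu \<rho>) (\<lambda>\<eta>. \<Sum>x\<in>A. Vg \<rho> (\<eta> x))" by (rule intZ)
    show "integrable (nu \<rho>) (\<lambda>\<eta>. Fb (card A) (Sb A \<eta>))" by (rule int_Fb_Sb[OF c1])
    show "(\<lambda>\<eta>. Fb (card A) (Sb A \<eta>)) \<in> borel_measurable (sum_sigma \<rho> A)" by (rule mF)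
  qed
  then show ?thesis by (simp add: cond_block_def)
qed


lemma deriv_phi: "deriv phi \<rho> = 1 / (1 + \<rho>)^2"
proof -
  have e: "phi = (\<lambda>x. x / (1 + x))" by (rule ext) (simp add: phi_def)
  have "((\<lambda>x. x / (1 + x)) has_real_derivative ((1 * (1 + \<rho>) - \<rho> * 1) / (1 + \<rho>)^2)) (at \<rho>)"
    using rho_pos by (auto intro!: derivative_eq_intros simp: power2_eq_square)
  then have "((\<lambda>x. x / (1 + x)) has_real_derivative (1 / (1 + \<rho>)^2)) (at \<rho>)" by simp
  then show ?thesis unfolding e by (rule DERIV_imp_deriv)
qed

lemma key_id:
  fixes k N r :: real
  assumes nK: "N + k > 0" and r1: "1 + r > 0"
  shows "k*N/(N+k) + (N-k*r)^2/((N+k)*(1+r)^2) = k*r/(1+r) + (N-k*r)/(1+r)^2"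
proof -
  have poly: "k*N*(1+r)^2 + (N-k*r)^2 = k*r*(1+r)*(N+k) + (N-k*r)*(N+k)"
    by (simp add: power2_eq_square algebra_simps)
  have l: "k*N/(N+k) + (N-k*r)^2/((N+k)*(1+r)^2) = (k*N*(1+r)^2 + (N-k*r)^2) / ((N+k)*(1+r)^2)"
    using nK r1 by (simp add: add_divide_distrib)
  have r: "k*r/(1+r) + (N-k*r)/(1+r)^2 = (k*r*(1+r)*(N+k) + (N-k*r)*(N+k)) / ((N+k)*(1+r)^2)"
    using nK r1 by (simp add: add_divide_distrib power2_eq_square)
  show ?thesis unfolding l r poly ..
qed

lemma Fb_sq:
  assumes K: "K \<ge> 1"
  shows "(Fb K n)^2 \<le> 2 + 2 * (real n - real K * \<rho>)^4 / (real K)^2"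
proof -
  define u where "u = Psi K n - real K * real n / (real n + real K)"
  define Q where "Q = (real n - real K * \<rho>)^2 / real K"
  define v where "v = (real n - real K * \<rho>)^2 / ((real n + real K) * (1 + \<rho>)^2)"
  have Kp: "real K > 0" using K by simp
  have nK: "real n + real K > 0" using K by simp
  have r1: "1 + \<rho> > 0" using rho_pos by simp
  have u0: "0 \<le> u \<and> u \<le> 1"
  proof (cases n)
    case 0 then show ?thesis by (simp add: u_def Psi_def)
  next
    case (Suc m)
    have d1: "real n + real K - 1 > 0" using Suc K by simp
    have ueq: "u = real K * real n / ((real n + real K - 1) * (real n + real K))"
      unfolding u_def Psi_def using d1 nK by (simp add: field_simps)
    have "real K * real n \<le> (real n + real K) * (real n + real K - 1)"
      by (rule mult_mono) (use K in auto)
    then have "real K * real n \<le> (real n + real K - 1) * (real n + real K)" by (simp add: mult.commute)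
    then show ?thesis unfolding ueq using d1 nK by (auto simp: divide_le_eq_1)
  qed
  have Fbeq: "Fb K n = u - v"
  proof -
    have k: "real K * real n / (real n + real K) + v = real K * \<rho> / (1 + \<rho>) + (real n - real K * \<rho>) / (1 + \<rho>)^2"
      unfolding v_def by (rule key_id[OF nK r1])
    have "Fb K n = Psi K n - real K * \<rho> / (1 + \<rho>) - (real n - real K * \<rho>) / (1 + \<rho>)^2"
      unfolding Fb_def deriv_phi phi_def by simp
    then show ?thesis unfolding u_def using k by linarith
  qed
  have v0: "0 \<le> v" unfolding v_def using nK r1 by simp
  have vQ: "v \<le> Q"
  proof -
    have "real K \<le> (real n + real K) * (1 + \<rho>)^2"
    proof -
      have "real K * 1 \<le> (real n + real K) * (1 + \<rho>)^2"
      proof (rule mult_mono)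
        have "1 * 1 \<le> (1 + \<rho>) * (1 + \<rho>)" by (rule mult_mono) (use rho_pos in auto)
        then show "1 \<le> (1 + \<rho>)^2" by (simp add: power2_eq_square)
      qed (use rho_pos in auto)
      then show ?thesis by simp
    qed
    then show ?thesis unfolding v_def Q_def using Kp
      by (intro divide_left_mono) auto
  qed
  have Q0: "0 \<le> Q" unfolding Q_def using Kp by simp
  have a: "\<bar>u - v\<bar> \<le> 1 + Q" using u0 v0 vQ Q0 by linarith
  have "(Fb K n)^2 = \<bar>u - v\<bar>^2" unfolding Fbeq by simp
  also have "\<dots> \<le> (1 + Q)^2" by (rule power_mono[OF a]) simp
  also have "\<dots> \<le> 2 + 2 * Q^2"
  proof -
    have "(1 + Q)^2 = 2 + 2 * Q^2 - (Q - 1)^2" by (simp add: power2_eq_square algebra_simps)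
    moreover have "0 \<le> (Q - 1)^2" by simp
    ultimately show ?thesis by linarith
  qed
  also have "Q^2 = (real n - real K * \<rho>)^4 / (real K)^2"
    unfolding Q_def by (simp add: power_divide power_mult[symmetric])
  finally show ?thesis by simp
qed


lemma sum_pow4_geom: "summable (\<lambda>n. (1 - p)^n * real n ^ 4)"
proof -
  define q where "q = 1 - p"
  have q0: "0 < q" and q1: "q < 1" using p_pos p_lt1 by (auto simp: q_def)
  define s where "s = sqrt q"
  have s0: "0 < s" and s1: "s < 1" using q0 q1 by (auto simp: s_def)
  define t where "t = 1 / s"
  have t1: "t > 1" using s0 s1 by (simp add: t_def)
  define L where "L = ln t"
  have L0: "L > 0" using t1 by (simp add: L_def)
  have bnd: "q^n * real n ^ 4 \<le> (4 / L)^4 * s^n" for n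
  proof -
    have e1: "exp (real n * L / 4) \<ge> real n * L / 4"
      using exp_ge_add_one_self[of "real n * L / 4"] by linarith
    have "(real n * L / 4)^4 \<le> (exp (real n * L / 4))^4"
      by (rule power_mono[OF e1]) (use L0 in simp)
    also have "(exp (real n * L / 4))^4 = exp (real n * L)"
      by (simp add: exp_of_nat_mult[symmetric])
    also have "exp (real n * L) = t ^ n"
      using t1 by (simp add: L_def exp_of_nat_mult)
    finally have "(real n * L / 4)^4 \<le> t^n" .
    moreover have "(real n * L / 4)^4 = real n ^ 4 * (L / 4)^4" by (simp add: power_mult_distrib power_divide)
    ultimately have "real n ^ 4 * (L / 4)^4 \<le> t^n" by simp
    then have "real n ^ 4 \<le> t^n / (L/4)^4" using L0 by (simp add: field_simps)
    then have "real n ^ 4 \<le> (4 / L)^4 * t^n" by (simp add: field_simps)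
    then have "q^n * real n ^ 4 \<le> q^n * ((4 / L)^4 * t^n)"
      by (rule mult_left_mono) (use q0 in simp)
    also have "q^n * ((4 / L)^4 * t^n) = (4 / L)^4 * (q * t)^n" by (simp add: power_mult_distrib)
    also have "q * t = s" using q0 s0 by (simp add: t_def s_def real_sqrt_mult[symmetric] field_simps)
    finally show ?thesis .
  qed
  have "summable (\<lambda>n. (4 / L)^4 * s^n)"
    by (rule summable_mult) (rule summable_geometric, use s0 s1 in simp)
  then show ?thesis unfolding q_def[symmetric]
    by (rule summable_comparison_test'[where N=0]) (use bnd q0 in simp)
qed

lemma int_pow4: "integrable G (\<lambda>k. real k ^ 4)"
proof -
  have "summable (\<lambda>x. p * ((1 - p)^x * real x ^ 4))"
    by (rule summable_mult) (rule sum_pow4_geom)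
  then show ?thesis
    unfolding measure_pmf_eq_density using p_pos p_lt1
    by (subst integrable_density) (auto simp: integrable_count_space_nat_iff mult_ac)
qed

lemma int_pow: "i \<le> 4 \<Longrightarrow> integrable G (\<lambda>k. real k ^ i)"
proof -
  assume i: "i \<le> 4"
  have "integrable G (\<lambda>k. 1 + real k ^ 4)" using int_pow4 by simp
  then show ?thesis
  proof (rule Bochner_Integration.integrable_bound)
    show "(\<lambda>k. real k ^ i) \<in> borel_measurable G" by simp
    show "AE k in G. norm (real k ^ i) \<le> norm (1 + real k ^ 4)"
    proof (rule AE_I2)
      fix k :: nat
      show "norm (real k ^ i) \<le> norm (1 + real k ^ 4)"
      proof (cases "k = 0")
        case True then show ?thesis by (cases i) auto
      next
        case False
        then have "real k ^ i \<le> real k ^ 4" using i by (intro power_increasing) auto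
        then show ?thesis by simp
      qed
    qed
  qed
qed

lemma int_cpow: "j \<le> 4 \<Longrightarrow> integrable G (\<lambda>k. (real k - \<rho>) ^ j)"
proof -
  assume j: "j \<le> 4"
  have e: "(real k - \<rho>) ^ j = (\<Sum>i\<le>j. of_nat (j choose i) * real k ^ i * (- \<rho>) ^ (j - i))" for k
    using binomial_ring[of "real k" "- \<rho>" j] by simp
  show ?thesis unfolding e
    using int_pow j by (intro Bochner_Integration.integrable_sum integrable_mult_left integrable_mult_right) auto
qed

definition mY :: "nat \<Rightarrow> real" where "mY j = (\<integral>k. (real k - \<rho>) ^ j \<partial>G)"

lemma mY0: "mY 0 = 1" by (simp add: mY_def)

lemma mY1: "mY 1 = 0"
proof -
  have "(\<integral>k. real k - \<rho> \<partial>G) = (\<integral>k. real k \<partial>G) - \<rho>"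
    using int_G_real by (simp add: Bochner_Integration.integral_diff)
  also have "(\<integral>k. real k \<partial>G) = \<rho>"
  proof -
    have "(1 - p) / p = \<rho>" using rho_pos by (simp add: p_def field_simps)
    then show ?thesis using expectation_geometric_pmf[OF p_in] by simp
  qed
  finally show ?thesis by (simp add: mY_def)
qed

lemma mY_even_nonneg: "mY 2 \<ge> 0" "mY 4 \<ge> 0"
  unfolding mY_def by (auto intro!: integral_nonneg_AE simp: zero_le_even_power)

definition Tf :: "nat \<Rightarrow> nat \<Rightarrow> real" where "Tf K n = real n - real K * \<rho>"
definition TT :: "int set \<Rightarrow> (int \<Rightarrow> nat) \<Rightarrow> real" where "TT A \<eta> = Tf (card A) (Sb A \<eta>)"

lemma TT_insert: "finite A \<Longrightarrow> y \<notin> A \<Longrightarrow> TT (insert y A) \<eta> = TT A \<eta> + (real (\<eta> y) - \<rho>)"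
  by (simp add: TT_def Tf_def Sb_def algebra_simps)

lemma TT_meas[measurable]: "TT A \<in> borel_measurable (nu \<rho>)"
  unfolding TT_def by measurable

lemma int_Y: "j \<le> 4 \<Longrightarrow> integrable (nu \<rho>) (\<lambda>\<eta>. (real (\<eta> y) - \<rho>) ^ j)"
  using int_coord(1)[OF int_cpow] by blast

lemma E_Y: "j \<le> 4 \<Longrightarrow> (\<integral>\<eta>. (real (\<eta> y) - \<rho>) ^ j \<partial>nu \<rho>) = mY j"
  using int_coord(2)[OF int_cpow] by (simp add: mY_def)

lemma TT_expand:
  assumes A: "finite A" "y \<notin> A" and j: "j \<le> 4"
    and intA: "\<And>i. i \<le> 4 \<Longrightarrow> integrable (nu \<rho>) (\<lambda>\<eta>. TT A \<eta> ^ i)"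
  shows "integrable (nu \<rho>) (\<lambda>\<eta>. TT (insert y A) \<eta> ^ j)"
    and "(\<integral>\<eta>. TT (insert y A) \<eta> ^ j \<partial>nu \<rho>) = (\<Sum>i\<le>j. of_nat (j choose i) * (\<integral>\<eta>. TT A \<eta> ^ i \<partial>nu \<rho>) * mY (j - i))"
proof -
  have dis: "A \<inter> {y} = {}" using A by auto
  have ind: "N.indep_var borel (\<lambda>\<eta>. TT A \<eta> ^ i) borel (\<lambda>\<eta>. (real (\<eta> y) - \<rho>) ^ l)" for i l
    using indep_Sb_fun[OF dis, of "\<lambda>n. Tf (card A) n ^ i" "\<lambda>n. (real n - \<rho>) ^ l"]
    by (simp add: TT_def)
  have e: "TT (insert y A) \<eta> ^ j = (\<Sum>i\<le>j. of_nat (j choose i) * (TT A \<eta> ^ i * (real (\<eta> y) - \<rho>) ^ (j - i)))" for \<eta>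
    using binomial_ring[of "TT A \<eta>" "real (\<eta> y) - \<rho>" j] by (simp add: TT_insert[OF A] mult.assoc)
  have ip: "integrable (nu \<rho>) (\<lambda>\<eta>. TT A \<eta> ^ i * (real (\<eta> y) - \<rho>) ^ (j - i))"
    and Ep: "(\<integral>\<eta>. TT A \<eta> ^ i * (real (\<eta> y) - \<rho>) ^ (j - i) \<partial>nu \<rho>) = (\<integral>\<eta>. TT A \<eta> ^ i \<partial>nu \<rho>) * mY (j - i)"
    if "i \<le> j" for i
  proof -
    have "i \<le> 4" "j - i \<le> 4" using that j by auto
    note ii = intA[OF this(1)] int_Y[OF this(2)]
    show "integrable (nu \<rho>) (\<lambda>\<eta>. TT A \<eta> ^ i * (real (\<eta> y) - \<rho>) ^ (j - i))"
      by (rule N.indep_var_integrable[OF ind ii])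
    show "(\<integral>\<eta>. TT A \<eta> ^ i * (real (\<eta> y) - \<rho>) ^ (j - i) \<partial>nu \<rho>) = (\<integral>\<eta>. TT A \<eta> ^ i \<partial>nu \<rho>) * mY (j - i)"
      using N.indep_var_lebesgue_integral[OF ind ii] E_Y[OF \<open>j - i \<le> 4\<close>] by simp
  qed
  show "integrable (nu \<rho>) (\<lambda>\<eta>. TT (insert y A) \<eta> ^ j)"
    unfolding e using ip by (intro Bochner_Integration.integrable_sum integrable_mult_right) auto
  have "(\<integral>\<eta>. TT (insert y A) \<eta> ^ j \<partial>nu \<rho>) = (\<Sum>i\<le>j. (\<integral>\<eta>. of_nat (j choose i) * (TT A \<eta> ^ i * (real (\<eta> y) - \<rho>) ^ (j - i)) \<partial>nu \<rho>))"
    unfolding e using ip by (intro Bochner_Integration.integral_sum integrable_mult_right) auto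
  also have "\<dots> = (\<Sum>i\<le>j. of_nat (j choose i) * (\<integral>\<eta>. TT A \<eta> ^ i \<partial>nu \<rho>) * mY (j - i))"
    by (rule sum.cong[OF refl]) (simp add: Ep)
  finally show "(\<integral>\<eta>. TT (insert y A) \<eta> ^ j \<partial>nu \<rho>) = (\<Sum>i\<le>j. of_nat (j choose i) * (\<integral>\<eta>. TT A \<eta> ^ i \<partial>nu \<rho>) * mY (j - i))" .
qed


lemma sum4: "(\<Sum>i\<le>(4::nat). f i) = f 0 + f 1 + f 2 + f 3 + (f 4 :: real)"
  by (simp add: numeral_eq_Suc atMost_Suc add_ac)
lemma sum2: "(\<Sum>i\<le>(2::nat). f i) = f 0 + f 1 + (f 2 :: real)"
  by (simp add: numeral_eq_Suc atMost_Suc add_ac)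
lemma sum1: "(\<Sum>i\<le>(1::nat). f i) = f 0 + (f 1 :: real)"
  by (simp add: numeral_eq_Suc atMost_Suc add_ac)
lemma chooses: "(4::nat) choose 2 = 6" "(4::nat) choose 1 = 4" "(4::nat) choose 3 = 4" "(2::nat) choose 1 = 2"
  by (simp_all add: numeral_eq_Suc)

lemma TT_moments:
  assumes "finite A"
  shows "(\<forall>i\<le>4. integrable (nu \<rho>) (\<lambda>\<eta>. TT A \<eta> ^ i)) \<and>
    (\<integral>\<eta>. TT A \<eta> \<partial>nu \<rho>) = 0 \<and>
    (\<integral>\<eta>. TT A \<eta> ^ 2 \<partial>nu \<rho>) = real (card A) * mY 2 \<and>
    (\<integral>\<eta>. TT A \<eta> ^ 4 \<partial>nu \<rho>) \<le> (real (card A))^2 * (mY 4 + 3 * (mY 2)^2)"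
  using assms
proof (induction A rule: finite_induct)
  case empty
  have z: "TT {} \<eta> = 0" for \<eta> by (simp add: TT_def Tf_def Sb_def)
  show ?case by (simp add: z)
next
  case (insert y A)
  let ?E = "\<lambda>i. (\<integral>\<eta>. TT A \<eta> ^ i \<partial>nu \<rho>)"
  let ?K = "real (card A)"
  have intA: "\<And>i. i \<le> 4 \<Longrightarrow> integrable (nu \<rho>) (\<lambda>\<eta>. TT A \<eta> ^ i)" using insert.IH by auto
  have E0: "?E 0 = 1" by simp
  have E1: "?E 1 = 0" using insert.IH by simp
  have E1': "(\<integral>\<eta>. TT A \<eta> \<partial>nu \<rho>) = 0" using insert.IH by simp
  have mY1': "mY (Suc 0) = 0" using mY1 by simp
  have E2: "?E 2 = ?K * mY 2" using insert.IH by simp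
  have E4: "?E 4 \<le> ?K^2 * (mY 4 + 3 * (mY 2)^2)" using insert.IH by simp
  note X = TT_expand[OF insert.hyps(1) insert.hyps(2) _ intA]
  have i: "\<forall>i\<le>4. integrable (nu \<rho>) (\<lambda>\<eta>. TT (insert y A) \<eta> ^ i)"
    using X(1) by auto
  have m1: "(\<integral>\<eta>. TT (insert y A) \<eta> \<partial>nu \<rho>) = 0"
    using X(2)[of 1] by (simp add: sum1 E0 E1 E1' mY0 mY1 mY1')
  have m2: "(\<integral>\<eta>. TT (insert y A) \<eta> ^ 2 \<partial>nu \<rho>) = real (card (insert y A)) * mY 2"
    using X(2)[of 2] insert.hyps by (simp add: sum2 E0 E1 E1' E2 mY0 mY1 mY1' chooses algebra_simps)
  have m4: "(\<integral>\<eta>. TT (insert y A) \<eta> ^ 4 \<partial>nu \<rho>) = mY 4 + 6 * (?K * mY 2) * mY 2 + ?E 4"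
    using X(2)[of 4] by (simp add: sum4 E0 E1 E1' E2 mY0 mY1 mY1' chooses)
  have b4: "mY 4 + 6 * (?K * mY 2) * mY 2 + ?E 4 \<le> (?K + 1)^2 * (mY 4 + 3 * (mY 2)^2)"
  proof -
    have "mY 4 + 6 * (?K * mY 2) * mY 2 + ?E 4 \<le> mY 4 + 6 * (?K * mY 2) * mY 2 + ?K^2 * (mY 4 + 3 * (mY 2)^2)"
      using E4 by simp
    also have "\<dots> \<le> (?K + 1)^2 * (mY 4 + 3 * (mY 2)^2)"
    proof -
      have "(?K + 1)^2 * (mY 4 + 3 * (mY 2)^2) - (mY 4 + 6 * (?K * mY 2) * mY 2 + ?K^2 * (mY 4 + 3 * (mY 2)^2))
          = 2 * ?K * mY 4 + 3 * (mY 2)^2"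
        by (simp add: power2_eq_square algebra_simps)
      moreover have "0 \<le> 2 * ?K * mY 4 + 3 * (mY 2)^2" using mY_even_nonneg by simp
      ultimately show ?thesis by linarith
    qed
    finally show ?thesis .
  qed
  have "real (card (insert y A)) = ?K + 1" using insert.hyps by simp
  then show ?case using i m1 m2 m4 b4 by simp
qed


definition C0 :: real where "C0 = 2 + 2 * (mY 4 + 3 * (mY 2)^2)"

lemma EF2:
  assumes A: "finite A" "A \<noteq> {}"
  shows "integrable (nu \<rho>) (\<lambda>\<eta>. (Fb (card A) (Sb A \<eta>))^2)"
    and "(\<integral>\<eta>. (Fb (card A) (Sb A \<eta>))^2 \<partial>nu \<rho>) \<le> C0"
proof -
  let ?K = "card A"
  have c1: "?K \<ge> 1" using A by (simp add: Suc_le_eq card_gt_0_iff)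
  have Kp: "real ?K > 0" using c1 by simp
  have mom: "integrable (nu \<rho>) (\<lambda>\<eta>. TT A \<eta> ^ 4)" "(\<integral>\<eta>. TT A \<eta> ^ 4 \<partial>nu \<rho>) \<le> (real ?K)^2 * (mY 4 + 3 * (mY 2)^2)"
    using TT_moments[OF A(1)] by auto
  have bnd: "(Fb ?K (Sb A \<eta>))^2 \<le> 2 + 2 * TT A \<eta> ^ 4 / (real ?K)^2" for \<eta>
    using Fb_sq[OF c1, of "Sb A \<eta>"] by (simp add: TT_def Tf_def)
  have ib: "integrable (nu \<rho>) (\<lambda>\<eta>. 2 + 2 * TT A \<eta> ^ 4 / (real ?K)^2)"
    using mom(1) by auto
  show i: "integrable (nu \<rho>) (\<lambda>\<eta>. (Fb ?K (Sb A \<eta>))^2)"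
  proof (rule Bochner_Integration.integrable_bound[OF ib])
    show "(\<lambda>\<eta>. (Fb ?K (Sb A \<eta>))^2) \<in> borel_measurable (nu \<rho>)" by measurable
    show "AE \<eta> in nu \<rho>. norm ((Fb ?K (Sb A \<eta>))^2) \<le> norm (2 + 2 * TT A \<eta> ^ 4 / (real ?K)^2)"
    proof (rule AE_I2)
      fix \<eta>
      have "0 \<le> 2 + 2 * TT A \<eta> ^ 4 / (real ?K)^2" by (simp add: zero_le_even_power)
      then show "norm ((Fb ?K (Sb A \<eta>))^2) \<le> norm (2 + 2 * TT A \<eta> ^ 4 / (real ?K)^2)"
        using bnd[of \<eta>] by simp
    qed
  qed
  have "(\<integral>\<eta>. (Fb ?K (Sb A \<eta>))^2 \<partial>nu \<rho>) \<le> (\<integral>\<eta>. 2 + 2 * TT A \<eta> ^ 4 / (real ?K)^2 \<partial>nu \<rho>)"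
    by (rule integral_mono[OF i ib bnd])
  also have "\<dots> = 2 + 2 / (real ?K)^2 * (\<integral>\<eta>. TT A \<eta> ^ 4 \<partial>nu \<rho>)"
    using mom(1) by simp
  also have "\<dots> \<le> 2 + 2 / (real ?K)^2 * ((real ?K)^2 * (mY 4 + 3 * (mY 2)^2))"
    using mom(2) Kp by (intro add_left_mono mult_left_mono) auto
  also have "\<dots> = C0" using Kp by (simp add: C0_def)
  finally show "(\<integral>\<eta>. (Fb ?K (Sb A \<eta>))^2 \<partial>nu \<rho>) \<le> C0" .
qed

lemma var_le_sq:
  fixes X :: "(int \<Rightarrow> nat) \<Rightarrow> real"
  assumes "integrable (nu \<rho>) X" "integrable (nu \<rho>) (\<lambda>\<eta>. (X \<eta>)^2)"
  shows "integrable (nu \<rho>) (\<lambda>\<eta>. (X \<eta> - (\<integral>\<eta>. X \<eta> \<partial>nu \<rho>))^2)"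
    and "(\<integral>\<eta>. (X \<eta> - (\<integral>\<eta>. X \<eta> \<partial>nu \<rho>))^2 \<partial>nu \<rho>) \<le> (\<integral>\<eta>. (X \<eta>)^2 \<partial>nu \<rho>)"
proof -
  define m where "m = (\<integral>\<eta>. X \<eta> \<partial>nu \<rho>)"
  have e: "(X \<eta> - m)^2 = (X \<eta>)^2 - 2 * m * X \<eta> + m^2" for \<eta> by (simp add: power2_eq_square algebra_simps)
  show "integrable (nu \<rho>) (\<lambda>\<eta>. (X \<eta> - (\<integral>\<eta>. X \<eta> \<partial>nu \<rho>))^2)"
    unfolding m_def[symmetric] e using assms by auto
  have "(\<integral>\<eta>. (X \<eta> - m)^2 \<partial>nu \<rho>) = (\<integral>\<eta>. (X \<eta>)^2 \<partial>nu \<rho>) - 2 * m * m + m^2"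
    unfolding e using assms by (simp add: m_def)
  also have "\<dots> \<le> (\<integral>\<eta>. (X \<eta>)^2 \<partial>nu \<rho>)" by (simp add: power2_eq_square)
  finally show "(\<integral>\<eta>. (X \<eta> - (\<integral>\<eta>. X \<eta> \<partial>nu \<rho>))^2 \<partial>nu \<rho>) \<le> (\<integral>\<eta>. (X \<eta>)^2 \<partial>nu \<rho>)"
    unfolding m_def .
qed


lemma var_sum:
  fixes F :: "nat \<Rightarrow> (int \<Rightarrow> nat) \<Rightarrow> real" and Ft :: "(int \<Rightarrow> nat) \<Rightarrow> real" and J :: "nat set"
  assumes J: "finite J"
    and iF: "\<And>j. j \<in> J \<Longrightarrow> integrable (nu \<rho>) (F j)"
    and iF2: "\<And>j. j \<in> J \<Longrightarrow> integrable (nu \<rho>) (\<lambda>\<eta>. (F j \<eta>)^2)"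
    and bF: "\<And>j. j \<in> J \<Longrightarrow> (\<integral>\<eta>. (F j \<eta>)^2 \<partial>nu \<rho>) \<le> C"
    and ind: "\<And>i j. i \<in> J \<Longrightarrow> j \<in> J \<Longrightarrow> i \<noteq> j \<Longrightarrow> N.indep_var borel (F i) borel (F j)"
    and iT: "integrable (nu \<rho>) Ft" and iT2: "integrable (nu \<rho>) (\<lambda>\<eta>. (Ft \<eta>)^2)"
    and bT: "(\<integral>\<eta>. (Ft \<eta>)^2 \<partial>nu \<rho>) \<le> C"
  shows "variance_of (nu \<rho>) (\<lambda>\<eta>. (\<Sum>j\<in>J. F j \<eta>) - Ft \<eta>) \<le> 2 * C * real (card J) + 2 * C"
proof -
  define m where "m j = (\<integral>\<eta>. F j \<eta> \<partial>nu \<rho>)" for j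
  define mt where "mt = (\<integral>\<eta>. Ft \<eta> \<partial>nu \<rho>)"
  define Z where "Z j \<eta> = F j \<eta> - m j" for j \<eta>
  define U where "U \<eta> = (\<Sum>j\<in>J. Z j \<eta>)" for \<eta>
  define V where "V \<eta> = Ft \<eta> - mt" for \<eta>
  have mean: "(\<integral>\<eta>. (\<Sum>j\<in>J. F j \<eta>) - Ft \<eta> \<partial>nu \<rho>) = (\<Sum>j\<in>J. m j) - mt"
    using iF iT by (simp add: m_def mt_def Bochner_Integration.integral_sum)
  have W: "(\<Sum>j\<in>J. F j \<eta>) - Ft \<eta> - ((\<Sum>j\<in>J. m j) - mt) = U \<eta> - V \<eta>" for \<eta>
    by (simp add: U_def V_def Z_def sum_subtractf)
  have var: "variance_of (nu \<rho>) (\<lambda>\<eta>. (\<Sum>j\<in>J. F j \<eta>) - Ft \<eta>) = (\<integral>\<eta>. (U \<eta> - V \<eta>)^2 \<partial>nu \<rho>)"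
    unfolding variance_of_def mean W ..
  have iZ: "j \<in> J \<Longrightarrow> integrable (nu \<rho>) (Z j)" for j
    using iF unfolding Z_def by auto
  have EZ: "j \<in> J \<Longrightarrow> (\<integral>\<eta>. Z j \<eta> \<partial>nu \<rho>) = 0" for j
    using iF unfolding Z_def m_def by (simp add: N.prob_space)
  have Zsq: "j \<in> J \<Longrightarrow> integrable (nu \<rho>) (\<lambda>\<eta>. Z j \<eta> * Z j \<eta>) \<and> (\<integral>\<eta>. Z j \<eta> * Z j \<eta> \<partial>nu \<rho>) \<le> C" for j
  proof -
    assume j: "j \<in> J"
    note vl = var_le_sq[OF iF[OF j] iF2[OF j]]
    have e: "(\<lambda>\<eta>. Z j \<eta> * Z j \<eta>) = (\<lambda>\<eta>. (F j \<eta> - (\<integral>\<eta>. F j \<eta> \<partial>nu \<rho>))^2)"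
      by (simp add: Z_def m_def power2_eq_square)
    show ?thesis unfolding e using vl bF[OF j] by auto
  qed
  have iZZ: "i \<in> J \<Longrightarrow> j \<in> J \<Longrightarrow> i \<noteq> j \<Longrightarrow> integrable (nu \<rho>) (\<lambda>\<eta>. Z i \<eta> * Z j \<eta>) \<and> (\<integral>\<eta>. Z i \<eta> * Z j \<eta> \<partial>nu \<rho>) = 0" for i j
  proof -
    assume ij: "i \<in> J" "j \<in> J" "i \<noteq> j"
    have "N.indep_var borel ((\<lambda>x. x - m i) \<circ> F i) borel ((\<lambda>x. x - m j) \<circ> F j)"
      by (rule N.indep_var_compose[OF ind[OF ij]]) auto
    then have ind': "N.indep_var borel (Z i) borel (Z j)" by (simp add: comp_def Z_def[abs_def])
    show ?thesis
      using N.indep_var_integrable[OF ind' iZ[OF ij(1)] iZ[OF ij(2)]]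
        N.indep_var_lebesgue_integral[OF ind' iZ[OF ij(1)] iZ[OF ij(2)]] EZ[OF ij(1)] by simp
  qed
  have iZZ_all: "i \<in> J \<Longrightarrow> j \<in> J \<Longrightarrow> integrable (nu \<rho>) (\<lambda>\<eta>. Z i \<eta> * Z j \<eta>)" for i j
    using Zsq iZZ by (cases "i = j") auto
  have U2: "(U \<eta>)^2 = (\<Sum>i\<in>J. \<Sum>j\<in>J. Z i \<eta> * Z j \<eta>)" for \<eta>
    unfolding U_def power2_eq_square sum_product ..
  have iU2: "integrable (nu \<rho>) (\<lambda>\<eta>. (U \<eta>)^2)"
    unfolding U2 using iZZ_all by (intro Bochner_Integration.integrable_sum) auto
  have EU2: "(\<integral>\<eta>. (U \<eta>)^2 \<partial>nu \<rho>) \<le> C * real (card J)"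
  proof -
    have "(\<integral>\<eta>. (U \<eta>)^2 \<partial>nu \<rho>) = (\<Sum>i\<in>J. \<Sum>j\<in>J. (\<integral>\<eta>. Z i \<eta> * Z j \<eta> \<partial>nu \<rho>))"
      unfolding U2 using iZZ_all
      by (subst Bochner_Integration.integral_sum, force intro: Bochner_Integration.integrable_sum)
         (intro sum.cong refl Bochner_Integration.integral_sum, auto)
    also have "\<dots> = (\<Sum>i\<in>J. (\<integral>\<eta>. Z i \<eta> * Z i \<eta> \<partial>nu \<rho>))"
    proof (rule sum.cong[OF refl])
      fix i assume i: "i \<in> J"
      have "(\<Sum>j\<in>J. (\<integral>\<eta>. Z i \<eta> * Z j \<eta> \<partial>nu \<rho>)) = (\<integral>\<eta>. Z i \<eta> * Z i \<eta> \<partial>nu \<rho>) + (\<Sum>j\<in>J - {i}. (\<integral>\<eta>. Z i \<eta> * Z j \<eta> \<partial>nu \<rho>))"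
        using J i by (simp add: sum.remove)
      also have "(\<Sum>j\<in>J - {i}. (\<integral>\<eta>. Z i \<eta> * Z j \<eta> \<partial>nu \<rho>)) = 0"
        using iZZ i by (intro sum.neutral) auto
      finally show "(\<Sum>j\<in>J. (\<integral>\<eta>. Z i \<eta> * Z j \<eta> \<partial>nu \<rho>)) = (\<integral>\<eta>. Z i \<eta> * Z i \<eta> \<partial>nu \<rho>)" by simp
    qed
    also have "\<dots> \<le> (\<Sum>i\<in>J. C)"
      using Zsq by (intro sum_mono) auto
    also have "\<dots> = C * real (card J)" by simp
    finally show ?thesis .
  qed
  have vlT: "integrable (nu \<rho>) (\<lambda>\<eta>. (V \<eta>)^2)" "(\<integral>\<eta>. (V \<eta>)^2 \<partial>nu \<rho>) \<le> C"
    using var_le_sq[OF iT iT2] bT unfolding V_def mt_def by auto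
  have mU: "U \<in> borel_measurable (nu \<rho>)"
    unfolding U_def using iZ by (auto intro!: borel_measurable_sum)
  have mV: "V \<in> borel_measurable (nu \<rho>)"
    unfolding V_def using iT by auto
  have ib: "integrable (nu \<rho>) (\<lambda>\<eta>. 2 * (U \<eta>)^2 + 2 * (V \<eta>)^2)"
    using iU2 vlT(1) by auto
  have pw: "(U \<eta> - V \<eta>)^2 \<le> 2 * (U \<eta>)^2 + 2 * (V \<eta>)^2" for \<eta>
  proof -
    have "2 * (U \<eta>)^2 + 2 * (V \<eta>)^2 - (U \<eta> - V \<eta>)^2 = (U \<eta> + V \<eta>)^2"
      by (simp add: power2_eq_square algebra_simps)
    then show ?thesis by (metis diff_ge_0_iff_ge zero_le_power2)
  qed
  have iUV: "integrable (nu \<rho>) (\<lambda>\<eta>. (U \<eta> - V \<eta>)^2)"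
  proof (rule Bochner_Integration.integrable_bound[OF ib])
    show "(\<lambda>\<eta>. (U \<eta> - V \<eta>)^2) \<in> borel_measurable (nu \<rho>)" using mU mV by measurable
    show "AE \<eta> in nu \<rho>. norm ((U \<eta> - V \<eta>)^2) \<le> norm (2 * (U \<eta>)^2 + 2 * (V \<eta>)^2)"
      using pw by (auto intro!: AE_I2)
  qed
  have "(\<integral>\<eta>. (U \<eta> - V \<eta>)^2 \<partial>nu \<rho>) \<le> (\<integral>\<eta>. 2 * (U \<eta>)^2 + 2 * (V \<eta>)^2 \<partial>nu \<rho>)"
    by (rule integral_mono[OF iUV ib pw])
  also have "\<dots> = 2 * (\<integral>\<eta>. (U \<eta>)^2 \<partial>nu \<rho>) + 2 * (\<integral>\<eta>. (V \<eta>)^2 \<partial>nu \<rho>)"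
    using iU2 vlT(1) by simp
  also have "\<dots> \<le> 2 * (C * real (card J)) + 2 * C"
    using EU2 vlT(2) by linarith
  finally show ?thesis unfolding var by (simp add: mult_ac)
qed


lemma cond_block_meas: "cond_block \<rho> A \<in> borel_measurable (nu \<rho>)"
proof -
  interpret S: finite_measure_subalgebra "nu \<rho>" "sum_sigma \<rho> A" by (rule sigma_sub)
  show ?thesis unfolding cond_block_def by (rule borel_measurable_cond_exp2)
qed

lemma main_bound:
  assumes K: "K \<ge> 1" and L: "L \<ge> 1"
  shows "variance_of (nu \<rho>) (V2 \<rho> K L a) \<le> (4 * C0) * real L"
proof -
  define I where "I j = {a + int ((j - 1) * K) ..< a + int (j * K)}" for j
  define Tl where "Tl = {a ..< a + int (L * K)}"
  have cI: "j \<ge> 1 \<Longrightarrow> card (I j) = K" for j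
  proof -
    assume j: "j \<ge> 1"
    have "int (j * K) - int ((j - 1) * K) = int K"
      using j by (simp add: of_nat_diff diff_mult_distrib algebra_simps)
    then show ?thesis unfolding I_def by simp
  qed
  have fI: "finite (I j)" for j unfolding I_def by simp
  have neI: "j \<ge> 1 \<Longrightarrow> I j \<noteq> {}" for j using cI[of j] K by auto
  have disI: "i \<ge> 1 \<Longrightarrow> j \<ge> 1 \<Longrightarrow> i \<noteq> j \<Longrightarrow> I i \<inter> I j = {}" for i j
  proof -
    assume ij: "i \<ge> 1" "j \<ge> 1" "i \<noteq> j"
    have le: "u < v \<Longrightarrow> u \<ge> 1 \<Longrightarrow> int (u * K) \<le> int ((v - 1) * K)" for u v
      by (simp add: mult_right_mono)
    show ?thesis
    proof (cases "i < j")
      case True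
      then show ?thesis using le[OF True ij(1)] unfolding I_def by auto
    next
      case False
      then have "j < i" using ij by simp
      then show ?thesis using le[OF \<open>j < i\<close> ij(2)] unfolding I_def by auto
    qed
  qed
  have cT: "card Tl = L * K" unfolding Tl_def by (simp del: of_nat_mult)
  have fT: "finite Tl" unfolding Tl_def by simp
  have neT: "Tl \<noteq> {}" using cT K L by auto
  have LK: "L * K \<ge> 1" using K L by simp
  define W where "W \<eta> = (\<Sum>j\<in>{1..L}. Fb K (Sb (I j) \<eta>)) - Fb (L * K) (Sb Tl \<eta>)" for \<eta>
  have AE1: "AE \<eta> in nu \<rho>. \<forall>j\<in>{1..L}. cond_block \<rho> (I j) \<eta> = Fb K (Sb (I j) \<eta>)"
    by (rule AE_finite_allI) (use cond_block_AE[OF fI neI] cI in auto)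
  have AE2: "AE \<eta> in nu \<rho>. cond_block \<rho> Tl \<eta> = Fb (L * K) (Sb Tl \<eta>)"
    using cond_block_AE[OF fT neT] cT by simp
  have V2eq: "V2 \<rho> K L a = (\<lambda>\<eta>. (\<Sum>j\<in>{1..L}. cond_block \<rho> (I j) \<eta>) - cond_block \<rho> Tl \<eta>)"
    by (rule ext) (simp add: V2_def I_def Tl_def)
  have AEW: "AE \<eta> in nu \<rho>. V2 \<rho> K L a \<eta> = W \<eta>"
    using AE1 AE2 by eventually_elim (simp add: V2eq W_def)
  have mV: "V2 \<rho> K L a \<in> borel_measurable (nu \<rho>)"
    unfolding V2eq using cond_block_meas by measurable
  have mW: "W \<in> borel_measurable (nu \<rho>)" unfolding W_def by measurable
  have eint: "(\<integral>\<eta>. V2 \<rho> K L a \<eta> \<partial>nu \<rho>) = (\<integral>\<eta>. W \<eta> \<partial>nu \<rho>)"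
    by (rule integral_cong_AE[OF mV mW AEW])
  have "variance_of (nu \<rho>) (V2 \<rho> K L a) = variance_of (nu \<rho>) W"
    unfolding variance_of_def eint
    by (rule integral_cong_AE) (use mV mW AEW in auto)
  also have "\<dots> \<le> 2 * C0 * real (card {1..L}) + 2 * C0"
    unfolding W_def
  proof (rule var_sum)
    show "finite {1..L}" by simp
    fix j assume j: "j \<in> {1..L}"
    then have j1: "j \<ge> 1" by simp
    show "integrable (nu \<rho>) (\<lambda>\<eta>. Fb K (Sb (I j) \<eta>))" by (rule int_Fb_Sb[OF K])
    show "integrable (nu \<rho>) (\<lambda>\<eta>. (Fb K (Sb (I j) \<eta>))^2)"
      using EF2(1)[OF fI neI[OF j1]] cI[OF j1] by simp
    show "(\<integral>\<eta>. (Fb K (Sb (I j) \<eta>))^2 \<partial>nu \<rho>) \<le> C0"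
      using EF2(2)[OF fI neI[OF j1]] cI[OF j1] by simp
  next
    fix i j assume "i \<in> {1..L}" "j \<in> {1..L}" "i \<noteq> j"
    then have "I i \<inter> I j = {}" using disI by auto
    then show "N.indep_var borel (\<lambda>\<eta>. Fb K (Sb (I i) \<eta>)) borel (\<lambda>\<eta>. Fb K (Sb (I j) \<eta>))"
      by (rule indep_Sb_fun)
  next
    show "integrable (nu \<rho>) (\<lambda>\<eta>. Fb (L * K) (Sb Tl \<eta>))" by (rule int_Fb_Sb[OF LK])
    show "integrable (nu \<rho>) (\<lambda>\<eta>. (Fb (L * K) (Sb Tl \<eta>))^2)"
      using EF2(1)[OF fT neT] cT by simp
    show "(\<integral>\<eta>. (Fb (L * K) (Sb Tl \<eta>))^2 \<partial>nu \<rho>) \<le> C0"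
      using EF2(2)[OF fT neT] cT by simp
  qed
  also have "\<dots> \<le> (4 * C0) * real L"
  proof -
    have "C0 \<ge> 0" unfolding C0_def using mY_even_nonneg by simp
    moreover have h: "C0 * 1 \<le> C0 * real L" using L \<open>C0 \<ge> 0\<close> by (intro mult_left_mono) auto
    have c: "real (card {1..L}) = real L" by simp
    have e1: "2 * C0 * real (card {1..L}) + 2 * C0 = 2 * (C0 * real L) + 2 * C0" unfolding c by simp
    have e2: "4 * C0 * real L = 4 * (C0 * real L)" by simp
    show ?thesis unfolding e1 e2 using h by linarith
  qed
  finally show ?thesis .
qed

end

theorem mainTheorem11:
  fixes \<rho> :: real
  assumes "\<rho> > 0"
  shows "\<exists>C::real. \<forall>K L :: nat. \<forall>a :: int. K \<ge> 1 \<longrightarrow> L \<ge> 1 \<longrightarrow>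
           variance_of (nu \<rho>) (V2 \<rho> K L a) \<le> C * real L"
proof -
  interpret geo \<rho> by unfold_locales (rule assms)
  show ?thesis using main_bound by blast
qed

end
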